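(* Let $n>1$ be an odd integer, $k\ge1$, and $p$ the smallest prime divisor of $n$. Then $\mathrm{C}^{n,k}_{\mathrm{RDH}}$ is a $\frac{1}{(p-1)n^{k-1}},\frac{1}{p-1}$-authentication code with secrecy for equiprobable source states on $\mathbb{Z}_n^k\setminus\{\mathbf{0}\}$; that is, it provides $\frac{1}{(p-1)n^{k-1}}$-secrecy on $\mathbb{Z}_n^k\setminus\{\mathbf{0}\}$ and is $\frac{1}{p-1}$-secure against substitution attacks.
   Context: For $\mathbf{y}\in(\mathbb{Z}_n^* )^k$ and $\mathbf{m}\in\mathbb{Z}_n^k$ let $\Upsilon_{\mathbf{y}}(\mathbf{m})=\sum_{i=1}^k m_iy_i\bmod n$. The code $\mathrm{C}^{n,k}_{\mathrm{RDH}}$ has source states $\mathcal{S}=\mathbb{Z}_n^k$, keys $\mathcal{K}=\mathbb{Z}_n^k\times(\mathbb{Z}_n^* )^k$ (pairs $\mathbf{x}\|\mathbf{y}$), ciphertexts $\mathcal{M}=\mathbb{Z}_n^k\times\mathbb{Z}_n$ (pairs $\mathbf{c}\|t$). Encryption: $\mathcal{E}_{\mathbf{x}\|\mathbf{y}}(\mathbf{m})=(\mathbf{m}+\mathbf{x}\bmod n)\,\|\,\Upsilon_{\mathbf{y}}(\mathbf{m})$ (componentwise addition). Decryption: $\mathcal{D}_{\mathbf{x}\|\mathbf{y}}(\mathbf{c}\|t)=\mathbf{c}-\mathbf{x}\bmod n$ if $\Upsilon_{\mathbf{y}}(\mathbf{c}-\mathbf{x})=t$, and $\bot$ otherwise.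 Source states and keys are chosen uniformly and independently. The code provides $\varepsilon$-secrecy on $\mathcal{S}'\subseteq\mathcal{S}$ if for every $\mathbf{m}\in\mathcal{S}'$ and every $c\in\mathcal{M}$ (with the conditioning event of positive probability), $\Pr_{\mathbf{m}'\leftarrow\mathcal{S},\kappa\leftarrow\mathcal{K}}[\mathbf{m}'=\mathbf{m}\mid\mathcal{E}_\kappa(\mathbf{m}')=c]\le\varepsilon$. A forger is an arbitrary function $\mathcal{F}:\mathcal{M}\to\mathcal{M}$; the code is $\delta$-secure against substitution attacks if for every forger $\mathcal{F}$, $\Pr_{\mathbf{m}\leftarrow\mathcal{S},\kappa\leftarrow\mathcal{K}}[\mathcal{F}(c)\ne c\ \wedge\ \mathcal{D}_\kappa(\mathcal{F}(c))\ne\bot]\le\delta$ where $c=\mathcal{E}_\kappa(\mathbf{m})$. It is an $\varepsilon,\delta$-authentication code with secrecy for equiprobable source states on $\mathcal{S}'$ if both hold. *)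

theory Defs
  imports Complex_Main "HOL-Computational_Algebra.Primes"
begin

text \<open>Vectors in Z_n^k are represented as functions nat => int whose first k
 components lie in {0..<n} and which vanish from index k on.\<close>

definition vecs :: "int \<Rightarrow> nat \<Rightarrow> (nat \<Rightarrow> int) set" where
  "vecs n k = {m. (\<forall>i<k. 0 \<le> m i \<and> m i < n) \<and> (\<forall>i\<ge>k. m i = 0)}"

definition unit_vecs :: "int \<Rightarrow> nat \<Rightarrow> (nat \<Rightarrow> int) set" where
  "unit_vecs n k = {y \<in> vecs n k. \<forall>i<k. coprime (y i) n}"

definition zero_vec :: "nat \<Rightarrow> int" where
  "zero_vec = (\<lambda>i. 0)"

definition Upsilon :: "int \<Rightarrow> nat \<Rightarrow> (nat \<Rightarrow> int) \<Rightarrow> (nat \<Rightarrow> int) \<Rightarrow> int" where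
  "Upsilon n k y m = (\<Sum>i<k. m i * y i) mod n"

definition sources :: "int \<Rightarrow> nat \<Rightarrow> (nat \<Rightarrow> int) set" where
  "sources n k = vecs n k"

definition keys :: "int \<Rightarrow> nat \<Rightarrow> ((nat \<Rightarrow> int) \<times> (nat \<Rightarrow> int)) set" where
  "keys n k = vecs n k \<times> unit_vecs n k"

definition ciphertexts :: "int \<Rightarrow> nat \<Rightarrow> ((nat \<Rightarrow> int) \<times> int) set" where
  "ciphertexts n k = vecs n k \<times> {0..<n}"

definition enc :: "int \<Rightarrow> nat \<Rightarrow> (nat \<Rightarrow> int) \<times> (nat \<Rightarrow> int) \<Rightarrow> (nat \<Rightarrow> int)
                    \<Rightarrow> (nat \<Rightarrow> int) \<times> int" where
  "enc n k key m = (case key of (x, y) \<Rightarrow>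
      ((\<lambda>i. if i < k then (m i + x i) mod n else 0), Upsilon n k y m))"

text \<open>Decryption; None plays the role of bottom.\<close>
definition dec :: "int \<Rightarrow> nat \<Rightarrow> (nat \<Rightarrow> int) \<times> (nat \<Rightarrow> int) \<Rightarrow> (nat \<Rightarrow> int) \<times> int
                    \<Rightarrow> (nat \<Rightarrow> int) option" where
  "dec n k key ct = (case key of (x, y) \<Rightarrow> case ct of (c, t) \<Rightarrow>
      (let m = (\<lambda>i. if i < k then (c i - x i) mod n else 0)
       in if Upsilon n k y m = t then Some m else None))"

text \<open>Probabilities with m' and kappa uniform and independent, as counting ratios
 over sources x keys.\<close>
definition prob_enc_eq :: "int \<Rightarrow> nat \<Rightarrow> ((nat \<Rightarrow> int) \<times> int) \<Rightarrow> real" where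
  "prob_enc_eq n k c =
     real (card {(m', \<kappa>) \<in> sources n k \<times> keys n k. enc n k \<kappa> m' = c})
     / real (card (sources n k \<times> keys n k))"

definition cond_prob_source :: "int \<Rightarrow> nat \<Rightarrow> (nat \<Rightarrow> int) \<Rightarrow> ((nat \<Rightarrow> int) \<times> int) \<Rightarrow> real" where
  "cond_prob_source n k m c =
     real (card {(m', \<kappa>) \<in> sources n k \<times> keys n k. m' = m \<and> enc n k \<kappa> m' = c})
     / real (card {(m', \<kappa>) \<in> sources n k \<times> keys n k. enc n k \<kappa> m' = c})"

definition provides_secrecy :: "int \<Rightarrow> nat \<Rightarrow> real \<Rightarrow> (nat \<Rightarrow> int) set \<Rightarrow> bool" where
  "provides_secrecy n k \<epsilon> S' \<longleftrightarrow>
     (\<forall>m \<in> S'. \<forall>c \<in> ciphertexts n k. prob_enc_eq n k c > 0 \<longrightarrow>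
        cond_prob_source n k m c \<le> \<epsilon>)"

definition subst_success_prob ::
  "int \<Rightarrow> nat \<Rightarrow> ((nat \<Rightarrow> int) \<times> int \<Rightarrow> (nat \<Rightarrow> int) \<times> int) \<Rightarrow> real" where
  "subst_success_prob n k F =
     real (card {(m, \<kappa>) \<in> sources n k \<times> keys n k.
                   F (enc n k \<kappa> m) \<noteq> enc n k \<kappa> m \<and> dec n k \<kappa> (F (enc n k \<kappa> m)) \<noteq> None})
     / real (card (sources n k \<times> keys n k))"

definition secure_against_substitution :: "int \<Rightarrow> nat \<Rightarrow> real \<Rightarrow> bool" where
  "secure_against_substitution n k \<delta> \<longleftrightarrow>
     (\<forall>F. (\<forall>c \<in> ciphertexts n k. F c \<in> ciphertexts n k) \<longrightarrow> subst_success_prob n k F \<le> \<delta>)"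

definition auth_code_with_secrecy :: "int \<Rightarrow> nat \<Rightarrow> real \<Rightarrow> real \<Rightarrow> (nat \<Rightarrow> int) set \<Rightarrow> bool" where
  "auth_code_with_secrecy n k \<epsilon> \<delta> S' \<longleftrightarrow>
     provides_secrecy n k \<epsilon> S' \<and> secure_against_substitution n k \<delta>"

end

theory Submission
  imports Defs "HOL-Number_Theory.Cong" "HOL-Library.FuncSet"
begin

lemma mod_range_eq:
  fixes a b n :: int
  assumes "0 \<le> a" "a < n" "0 \<le> b" "b < n" "[a = b] (mod n)"
  shows "a = b"
  using assms by (simp add: cong_def)

lemma sum_upd_eq:
  fixes f g :: "nat \<Rightarrow> int"
  assumes "j < k" "\<And>i. i \<noteq> j \<Longrightarrow> f i = g i"
  shows "(\<Sum>i<k. f i) - f j = (\<Sum>i<k. g i) - g j"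
proof -
  have "(\<Sum>i<k. f i) = f j + (\<Sum>i\<in>{..<k}-{j}. f i)"
    using assms(1) by (simp add: sum.remove)
  moreover have "(\<Sum>i<k. g i) = g j + (\<Sum>i\<in>{..<k}-{j}. g i)"
    using assms(1) by (simp add: sum.remove)
  moreover have "(\<Sum>i\<in>{..<k}-{j}. f i) = (\<Sum>i\<in>{..<k}-{j}. g i)"
    using assms(2) by (intro sum.cong) auto
  ultimately show ?thesis by simp
qed

lemma vecs_finite_card:
  assumes "n \<ge> 0"
  shows "finite (vecs n k) \<and> card (vecs n k) = nat n ^ k"
proof -
  let ?P = "PiE {..<k} (\<lambda>_. {0..<n})"
  have bij: "bij_betw (\<lambda>f i. if i < k then f i else 0) ?P (vecs n k)"
  proof (rule bij_betw_byWitness[where f' = "\<lambda>m. restrict m {..<k}"])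
    show "\<forall>a\<in>?P. restrict (\<lambda>i. if i < k then a i else 0) {..<k} = a"
      by (auto simp: PiE_def extensional_def fun_eq_iff)
    show "\<forall>a'\<in>vecs n k. (\<lambda>i. if i < k then restrict a' {..<k} i else 0) = a'"
      by (auto simp: vecs_def fun_eq_iff)
    show "(\<lambda>f i. if i < k then f i else 0) ` ?P \<subseteq> vecs n k"
      by (auto simp: vecs_def PiE_def Pi_def)
    show "(\<lambda>m. restrict m {..<k}) ` vecs n k \<subseteq> ?P"
      by (auto simp: vecs_def PiE_def Pi_def)
  qed
  have "finite ?P" by (simp add: finite_PiE)
  moreover have "card ?P = nat n ^ k" by (simp add: card_PiE)
  ultimately show ?thesis using bij bij_betw_finite bij_betw_same_card by metis
qed

definition dlt :: "int \<Rightarrow> ((nat \<Rightarrow> int) \<times> int \<Rightarrow> (nat \<Rightarrow> int) \<times> int) \<Rightarrow> (nat \<Rightarrow> int) \<times> int \<Rightarrow> nat \<Rightarrow> int" where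
  "dlt n F c = (\<lambda>i. (fst (F c) i - fst c i) mod n)"

definition Jx :: "nat \<Rightarrow> int \<Rightarrow> ((nat \<Rightarrow> int) \<times> int \<Rightarrow> (nat \<Rightarrow> int) \<times> int) \<Rightarrow> (nat \<Rightarrow> int) \<times> int \<Rightarrow> nat" where
  "Jx k n F c = (LEAST i. i < k \<and> dlt n F c i \<noteq> 0)"

definition ivn :: "int \<Rightarrow> int \<Rightarrow> int" where
  "ivn n u = (SOME w. [u * w = 1] (mod n))"

lemma ivn: "coprime u n \<Longrightarrow> [u * ivn n u = 1] (mod n)"
  unfolding ivn_def using someI_ex[OF cong_solve_coprime_int] by blast

lemma ivn_coprime: "coprime u n \<Longrightarrow> coprime (ivn n u) n"
  using ivn[of u n] coprime_iff_invertible_int by (metis mult.commute)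

definition Psi where
  "Psi n k F = (\<lambda>((m, x, y), u). let c = enc n k (x, y) m; j = Jx k n F c;
      m' = m(j := (m j * ivn n u) mod n); y' = y(j := (u * y j) mod n);
      x' = (\<lambda>i. if i < k then (fst c i - m' i) mod n else 0) in (m', (x', y')))"

context
  fixes n p :: int
  assumes n1: "n > 1" and pp: "prime p" and pdvd: "p dvd n"
    and pmin: "\<forall>q. prime q \<and> q dvd n \<longrightarrow> p \<le> q"
begin

lemma coprime_small:
  fixes d :: int
  assumes "0 < d" "d < p"
  shows "coprime d n"
proof (rule ccontr)
  assume nc: "\<not> coprime d n"
  have "gcd d n \<noteq> 0" using assms by simp
  moreover have "\<not> is_unit (gcd d n)" using nc by (metis is_unit_gcd)
  ultimately obtain q where q: "q dvd gcd d n" "prime q"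
    using prime_divisor_exists by blast
  have "q dvd d" "q dvd n" using q by auto
  have "q > 0" using q(2) prime_gt_0_int by blast
  have "q \<le> d" using \<open>q dvd d\<close> assms(1) zdvd_imp_le by blast
  moreover have "p \<le> q" using pmin q(2) \<open>q dvd n\<close> by blast
  ultimately show False using assms by simp
qed

lemma key:
  fixes a u u2 :: int
  assumes "0 < u" "u < p" "0 < u2" "u2 < p" "n dvd a * (u - u2)" "\<not> n dvd a"
  shows "u = u2"
proof (rule ccontr)
  assume "u \<noteq> u2"
  then have "0 < \<bar>u - u2\<bar>" "\<bar>u - u2\<bar> < p" using assms(1-4) by (simp_all add: abs_if)
  then have "coprime \<bar>u - u2\<bar> n" by (rule coprime_small)
  then have "coprime n (u - u2)" by (simp add: coprime_commute)
  then have "n dvd a" using assms(5) coprime_dvd_mult_left_iff by blast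
  then show False using assms(6) by simp
qed

lemma gen_inj:
  fixes a y zz :: "nat \<Rightarrow> int" and u v :: int
  assumes j: "j < k" and aj: "0 < a j" "a j < n"
    and cy: "coprime (y j) n" "coprime (zz j) n"
    and ry: "0 \<le> y j" "y j < n" "0 \<le> zz j" "zz j < n"
    and sc: "[(\<Sum>i<k. a i * y i) = (\<Sum>i<k. a i * zz i)] (mod n)"
    and u: "0 < u" "u < p" "0 < v" "v < p"
    and eq: "y(j := (u * y j) mod n) = zz(j := (v * zz j) mod n)"
  shows "u = v \<and> y = zz"
proof -
  define y' where "y' = y(j := (u * y j) mod n)"
  have e1: "(\<Sum>i<k. a i * y' i) - a j * y' j = (\<Sum>i<k. a i * y i) - a j * y j"
    using j by (intro sum_upd_eq) (auto simp: y'_def)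
  have e2: "(\<Sum>i<k. a i * y' i) - a j * y' j = (\<Sum>i<k. a i * zz i) - a j * zz j"
  proof (rule sum_upd_eq[OF j])
    fix i assume "i \<noteq> j"
    then have "y i = zz i" using eq by (metis fun_upd_other)
    then show "a i * y' i = a i * zz i" using \<open>i \<noteq> j\<close> by (simp add: y'_def)
  qed
  have c1: "[a j * y j = a j * zz j] (mod n)"
  proof -
    have "a j * y j = (\<Sum>i<k. a i * y i) - ((\<Sum>i<k. a i * zz i) - a j * zz j)"
      using e1 e2 by simp
    moreover have "[(\<Sum>i<k. a i * y i) - ((\<Sum>i<k. a i * zz i) - a j * zz j)
       = (\<Sum>i<k. a i * zz i) - ((\<Sum>i<k. a i * zz i) - a j * zz j)] (mod n)"
      using sc by (intro cong_diff) auto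
    ultimately show ?thesis by simp
  qed
  have yj: "(u * y j) mod n = (v * zz j) mod n"
    using eq by (metis fun_upd_same)
  then have c2: "[u * y j = v * zz j] (mod n)" by (simp add: cong_def)
  have "[a j * (u * y j) = a j * (v * zz j)] (mod n)"
    using c2 by (simp add: cong_mult)
  moreover have "[a j * (v * zz j) = a j * (v * y j)] (mod n)"
  proof -
    have "[v * (a j * zz j) = v * (a j * y j)] (mod n)"
      using c1 by (simp add: cong_mult cong_sym)
    then show ?thesis by (simp add: ac_simps)
  qed
  ultimately have "[a j * y j * u = a j * y j * v] (mod n)"
    by (metis (no_types, lifting) cong_trans mult.assoc mult.commute)
  then have d: "n dvd a j * y j * (u - v)"
    by (simp add: cong_iff_dvd_diff right_diff_distrib)
  have nd: "\<not> n dvd a j * y j"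
  proof
    assume "n dvd a j * y j"
    then have "n dvd a j" using cy(1) by (simp add: coprime_commute coprime_dvd_mult_left_iff)
    then have "n \<le> a j" using aj zdvd_imp_le by blast
    then show False using aj by simp
  qed
  have uu: "u = v" using key[OF u d nd] .
  have cu: "coprime u n" using coprime_small u by blast
  have "[y j = zz j] (mod n)" using c2 uu cong_mult_lcancel[OF cu] by simp
  then have "y j = zz j" using ry mod_range_eq by blast
  moreover have "\<And>i. i \<noteq> j \<Longrightarrow> y i = zz i"
    using eq by (metis fun_upd_other)
  ultimately have "y = zz" by (metis ext)
  with uu show ?thesis by simp
qed


lemma num_le:
  assumes "n > 0"
  shows "card {(m', \<kappa>) \<in> sources n k \<times> keys n k. m' = m \<and> enc n k \<kappa> m' = (cv, t)}
         \<le> card {y \<in> unit_vecs n k. Upsilon n k y m = t}"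
proof (rule card_inj_on_le[where f = "\<lambda>(m', x, y). y"])
  show "finite {y \<in> unit_vecs n k. Upsilon n k y m = t}"
    using vecs_finite_card[of n k] assms by (auto simp: unit_vecs_def intro: finite_subset)
  show "(\<lambda>(m', x, y). y) ` {(m', \<kappa>) \<in> sources n k \<times> keys n k. m' = m \<and> enc n k \<kappa> m' = (cv, t)}
        \<subseteq> {y \<in> unit_vecs n k. Upsilon n k y m = t}"
    by (auto simp: keys_def enc_def)
  show "inj_on (\<lambda>(m', x, y). y) {(m', \<kappa>) \<in> sources n k \<times> keys n k. m' = m \<and> enc n k \<kappa> m' = (cv, t)}"
  proof (rule inj_onI, clarsimp)
    fix x y x2
    assume a: "m \<in> sources n k" "(x, y) \<in> keys n k" "(x2, y) \<in> keys n k"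
      "enc n k (x, y) m = (cv, t)" "enc n k (x2, y) m = (cv, t)"
    show "x = x2"
    proof
      fix i
      show "x i = x2 i"
      proof (cases "i < k")
        case True
        have "(m i + x i) mod n = (m i + x2 i) mod n"
          using a(4,5) True by (auto simp: enc_def fun_eq_iff split: if_splits)
        then have "[m i + x i = m i + x2 i] (mod n)" by (simp add: cong_def)
        then have "[x i = x2 i] (mod n)" by (simp add: cong_add_lcancel)
        then show ?thesis using a(2,3) True mod_range_eq
          by (auto simp: keys_def vecs_def)
      next
        case False
        then show ?thesis using a(2,3) by (auto simp: keys_def vecs_def)
      qed
    qed
  qed
qed



lemma Y_bound:
  assumes j: "j < k" and mj: "0 < m j" "m j < n"
  shows "card {y \<in> unit_vecs n k. Upsilon n k y m = t} * nat (p - 1) \<le> card (unit_vecs n k)"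
proof -
  let ?Y = "{y \<in> unit_vecs n k. Upsilon n k y m = t}"
  let ?f = "\<lambda>(y, u). y(j := (u * y j) mod n)"
  have fin: "finite (unit_vecs n k)"
    using vecs_finite_card[of n k] n1 by (auto simp: unit_vecs_def intro: finite_subset)
  have "card (?Y \<times> {1..p-1}) \<le> card (unit_vecs n k)"
  proof (rule card_inj_on_le[where f = ?f])
    show "finite (unit_vecs n k)" by (rule fin)
    show "?f ` (?Y \<times> {1..p-1}) \<subseteq> unit_vecs n k"
    proof (rule image_subsetI)
      fix z assume z: "z \<in> ?Y \<times> {1..p-1}"
      obtain y u where zz: "z = (y, u)" "y \<in> unit_vecs n k" "1 \<le> u" "u \<le> p - 1"
        using z by auto
      have cu: "coprime u n" using zz by (intro coprime_small) auto
      have "coprime (y j) n" using zz j by (auto simp: unit_vecs_def)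
      then have "coprime (u * y j mod n) n" using cu n1 by (simp add: coprime_mod_left_iff)
      then show "?f z \<in> unit_vecs n k"
        using zz j n1 by (auto simp: unit_vecs_def vecs_def)
    qed
    show "inj_on ?f (?Y \<times> {1..p-1})"
    proof (rule inj_onI)
      fix z1 z2 assume z1: "z1 \<in> ?Y \<times> {1..p-1}" and z2: "z2 \<in> ?Y \<times> {1..p-1}"
        and eq0: "?f z1 = ?f z2"
      obtain y u where zz: "z1 = (y, u)" "y \<in> unit_vecs n k" "Upsilon n k y m = t" "1 \<le> u" "u \<le> p - 1"
        using z1 by auto
      obtain y2 u2 where zz2: "z2 = (y2, u2)" "y2 \<in> unit_vecs n k" "Upsilon n k y2 m = t" "1 \<le> u2" "u2 \<le> p - 1"
        using z2 by auto
      have eq: "y(j := u * y j mod n) = y2(j := u2 * y2 j mod n)" using eq0 zz zz2 by simp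
      have sc: "[(\<Sum>i<k. m i * y i) = (\<Sum>i<k. m i * y2 i)] (mod n)"
        using zz(3) zz2(3) by (simp add: Upsilon_def cong_def)
      have yp: "coprime (y j) n" "0 \<le> y j" "y j < n"
        using zz(2) j by (auto simp: unit_vecs_def vecs_def)
      have y2p: "coprime (y2 j) n" "0 \<le> y2 j" "y2 j < n"
        using zz2(2) j by (auto simp: unit_vecs_def vecs_def)
      have up: "0 < u" "u < p" "0 < u2" "u2 < p" using zz zz2 by auto
      have "u = u2 \<and> y = y2"
        by (rule gen_inj[where a=m and j=j and k=k and y=y and zz=y2 and u=u and v=u2,
             OF j mj yp(1) y2p(1) yp(2,3) y2p(2,3) sc up eq])
      then show "z1 = z2" using zz zz2 by simp
    qed
  qed
  moreover have "card (?Y \<times> {1..p-1}) = card ?Y * card {1..p-1}"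
    by (rule card_cartesian_product)
  moreover have "card {1..p-1} = nat (p - 1)" by simp
  ultimately show ?thesis by simp
qed

lemma den_bound:
  assumes cv: "cv \<in> vecs n (Suc k')" and t: "0 \<le> t" "t < n"
  shows "card (unit_vecs n (Suc k')) * nat n ^ k'
     \<le> card {(m', \<kappa>) \<in> sources n (Suc k') \<times> keys n (Suc k'). enc n (Suc k') \<kappa> m' = (cv, t)}"
proof -
  define k where "k = Suc k'"
  define iv where "iv = (\<lambda>z::int. SOME w. [z * w = 1] (mod n))"
  have iv: "[z * iv z = 1] (mod n)" if "coprime z n" for z
    unfolding iv_def using someI_ex[OF cong_solve_coprime_int[OF that]] .
  define g where "g = (\<lambda>(y::nat\<Rightarrow>int, w::nat\<Rightarrow>int).
     let a = ((t - (\<Sum>i<k'. w i * y (Suc i))) * iv (y 0)) mod n;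
         m' = (\<lambda>i. if i = 0 then a else w (i - 1));
         x = (\<lambda>i. if i < k then (cv i - m' i) mod n else 0)
     in (m', (x, y)))"
  let ?D = "{(m', \<kappa>) \<in> sources n k \<times> keys n k. enc n k \<kappa> m' = (cv, t)}"
  have finD: "finite ?D"
  proof (rule finite_subset[of _ "vecs n k \<times> (vecs n k \<times> vecs n k)"])
    show "finite (vecs n k \<times> (vecs n k \<times> vecs n k))" using vecs_finite_card[of n k] n1 by auto
  qed (auto simp: sources_def keys_def unit_vecs_def)
  have "card (unit_vecs n k \<times> vecs n k') \<le> card ?D"
  proof (rule card_inj_on_le[where f = g])
    show "finite ?D" by (rule finD)
    show "inj_on g (unit_vecs n k \<times> vecs n k')"
    proof (rule inj_onI, clarsimp)
      fix y w y2 w2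
      assume "g (y, w) = g (y2, w2)"
      then have "y = y2" "\<And>i. w i = w2 i"
        by (auto simp: g_def Let_def fun_eq_iff) (metis Suc_not_Zero diff_Suc_1)
      then show "y = y2 \<and> w = w2" by auto
    qed
    show "g ` (unit_vecs n k \<times> vecs n k') \<subseteq> ?D"
    proof (rule image_subsetI)
      fix z assume z: "z \<in> unit_vecs n k \<times> vecs n k'"
      obtain y w where zz: "z = (y, w)" and y: "y \<in> unit_vecs n k" and w: "w \<in> vecs n k'"
        using z by auto
      define a where "a = ((t - (\<Sum>i<k'. w i * y (Suc i))) * iv (y 0)) mod n"
      define m' where "m' = (\<lambda>i. if i = 0 then a else w (i - 1))"
      define x where "x = (\<lambda>i. if i < k then (cv i - m' i) mod n else 0)"
      have g: "g (y, w) = (m', (x, y))" unfolding g_def Let_def x_def m'_def a_def by simp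
      have a: "0 \<le> a" "a < n" using n1 by (auto simp: a_def)
      have m': "m' \<in> vecs n k"
        using w a by (auto simp: vecs_def m'_def k_def)
      have x: "x \<in> vecs n k" using n1 by (auto simp: vecs_def x_def)
      have e1: "(\<lambda>i. if i < k then (m' i + x i) mod n else 0) = cv"
      proof
        fix i show "(if i < k then (m' i + x i) mod n else 0) = cv i"
        proof (cases "i < k")
          case True
          have "(m' i + (cv i - m' i) mod n) mod n = cv i mod n" by (simp add: mod_add_right_eq)
          also have "\<dots> = cv i" using cv True by (simp add: vecs_def k_def)
          finally show ?thesis using True by (simp add: x_def)
        next
          case False then show ?thesis using cv by (simp add: vecs_def k_def)
        qed
      qed
      have cy0: "coprime (y 0) n" using y by (auto simp: unit_vecs_def k_def)
      have sum: "(\<Sum>i<k. m' i * y i) = a * y 0 + (\<Sum>i<k'. w i * y (Suc i))"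
        unfolding k_def sum.lessThan_Suc_shift by (simp add: m'_def)
      have "[a * y 0 = (t - (\<Sum>i<k'. w i * y (Suc i))) * (y 0 * iv (y 0))] (mod n)"
      proof -
        have "[a = (t - (\<Sum>i<k'. w i * y (Suc i))) * iv (y 0)] (mod n)"
          unfolding a_def by (simp add: cong_def)
        then have "[a * y 0 = (t - (\<Sum>i<k'. w i * y (Suc i))) * iv (y 0) * y 0] (mod n)"
          by (rule cong_mult) simp
        then show ?thesis by (simp add: algebra_simps)
      qed
      also have "[(t - (\<Sum>i<k'. w i * y (Suc i))) * (y 0 * iv (y 0)) = (t - (\<Sum>i<k'. w i * y (Suc i))) * 1] (mod n)"
        using iv[OF cy0] by (intro cong_mult) auto
      finally have "[a * y 0 + (\<Sum>i<k'. w i * y (Suc i)) = (t - (\<Sum>i<k'. w i * y (Suc i))) * 1 + (\<Sum>i<k'. w i * y (Suc i))] (mod n)"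
        by (rule cong_add) simp
      then have "[a * y 0 + (\<Sum>i<k'. w i * y (Suc i)) = t] (mod n)" by simp
      then have e2: "Upsilon n k y m' = t"
        using t by (simp add: Upsilon_def sum cong_def)
      have "enc n k (x, y) m' = (cv, t)" using e1 e2 by (simp add: enc_def)
      then show "g z \<in> ?D" using m' x y unfolding zz g by (simp add: sources_def keys_def)
    qed
  qed
  then show ?thesis
    using vecs_finite_card[of n k'] n1 by (simp add: card_cartesian_product k_def)
qed

lemma enc_in_ct:
  assumes "m \<in> vecs n k"
  shows "enc n k (x, y) m \<in> ciphertexts n k"
  using n1 by (auto simp: enc_def ciphertexts_def vecs_def Upsilon_def)

lemma forge_facts:
  assumes F: "\<forall>c\<in>ciphertexts n k. F c \<in> ciphertexts n k"
    and a: "m \<in> vecs n k" "x \<in> vecs n k"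
    and ne: "F (enc n k (x, y) m) \<noteq> enc n k (x, y) m"
    and dc: "dec n k (x, y) (F (enc n k (x, y) m)) \<noteq> None"
  shows "Jx k n F (enc n k (x, y) m) < k \<and> 0 < dlt n F (enc n k (x, y) m) (Jx k n F (enc n k (x, y) m))
     \<and> dlt n F (enc n k (x, y) m) (Jx k n F (enc n k (x, y) m)) < n
     \<and> [(\<Sum>i<k. dlt n F (enc n k (x, y) m) i * y i)
          = snd (F (enc n k (x, y) m)) - snd (enc n k (x, y) m)] (mod n)"
proof -
  define c where "c = enc n k (x, y) m"
  obtain cv t where c: "c = (cv, t)" by (cases c)
  obtain cv' t' where Fc: "F c = (cv', t')" by (cases "F c")
  have cv: "cv = (\<lambda>i. if i < k then (m i + x i) mod n else 0)" and t: "t = Upsilon n k y m"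
    using c by (auto simp: c_def enc_def)
  have "c \<in> ciphertexts n k" unfolding c_def using a(1) by (rule enc_in_ct)
  then have "F c \<in> ciphertexts n k" using F by blast
  then have cv': "cv' \<in> vecs n k" "0 \<le> t'" "t' < n" using Fc by (auto simp: ciphertexts_def)
  define m'' where "m'' = (\<lambda>i. if i < k then (cv' i - x i) mod n else 0)"
  have t': "Upsilon n k y m'' = t'"
    using dc unfolding c_def[symmetric] Fc by (auto simp: dec_def m''_def Let_def split: if_splits)
  have d: "dlt n F c = (\<lambda>i. (cv' i - cv i) mod n)" using Fc by (simp add: dlt_def c)
  have ex: "\<exists>i. i < k \<and> dlt n F c i \<noteq> 0"
  proof (rule ccontr)
    assume "\<not> ?thesis"
    then have z: "\<And>i. i < k \<Longrightarrow> (cv' i - cv i) mod n = 0" using d by auto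
    have "cv' = cv"
    proof
      fix i show "cv' i = cv i"
      proof (cases "i < k")
        case True
        then have "[cv' i = cv i] (mod n)" using z[OF True] by (simp add: cong_iff_dvd_diff dvd_eq_mod_eq_0)
        moreover have "0 \<le> cv i" "cv i < n" using True n1 by (auto simp: cv)
        ultimately show ?thesis using cv' True mod_range_eq by (auto simp: vecs_def)
      next
        case False then show ?thesis using cv' by (auto simp: vecs_def cv)
      qed
    qed
    have "m'' = m"
    proof
      fix i show "m'' i = m i"
      proof (cases "i < k")
        case True
        have "m'' i = ((m i + x i) mod n - x i) mod n" using True \<open>cv' = cv\<close> by (simp add: m''_def cv)
        also have "\<dots> = m i mod n" by (simp add: mod_diff_left_eq)
        also have "\<dots> = m i" using a True by (simp add: vecs_def)
        finally show ?thesis .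
      next
        case False then show ?thesis using a by (simp add: m''_def vecs_def)
      qed
    qed
    then have "t' = t" using t t' by simp
    then have "F c = c" using Fc c \<open>cv' = cv\<close> by simp
    then show False using ne by (simp add: c_def)
  qed
  define j where "j = Jx k n F c"
  have j: "j < k \<and> dlt n F c j \<noteq> 0"
    unfolding j_def Jx_def by (rule LeastI_ex[OF ex])
  have dr: "0 \<le> dlt n F c j" "dlt n F c j < n" using n1 by (auto simp: d)
  have sc: "[(\<Sum>i<k. dlt n F c i * y i) = t' - t] (mod n)"
  proof -
    have "[(\<Sum>i<k. m'' i * y i) = (\<Sum>i<k. (dlt n F c i + m i) * y i)] (mod n)"
    proof (rule cong_sum)
      fix i assume "i \<in> {..<k}"
      then have ik: "i < k" by simp
      have "[m'' i = cv' i - x i] (mod n)" using ik by (simp add: m''_def cong_def)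
      moreover have "[dlt n F c i + m i = (cv' i - cv i) + m i] (mod n)"
        by (simp add: d cong_def mod_add_left_eq)
      moreover have "[(cv' i - cv i) + m i = (cv' i - (m i + x i)) + m i] (mod n)"
        using ik by (intro cong_add cong_diff) (auto simp: cv cong_def)
      ultimately have "[m'' i = dlt n F c i + m i] (mod n)"
        by (metis (no_types, lifting) add_diff_cancel_left' diff_add_cancel diff_diff_eq2 cong_sym cong_trans add.commute diff_add_eq)
      then show "[m'' i * y i = (dlt n F c i + m i) * y i] (mod n)" by (rule cong_mult) simp
    qed
    moreover have "(\<Sum>i<k. (dlt n F c i + m i) * y i) = (\<Sum>i<k. dlt n F c i * y i) + (\<Sum>i<k. m i * y i)"
      by (simp add: distrib_right sum.distrib)
    moreover have "[(\<Sum>i<k. m'' i * y i) = t'] (mod n)" using t' cv'(2,3) by (simp add: Upsilon_def cong_def)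
    moreover have "[(\<Sum>i<k. m i * y i) = t] (mod n)" using t by (simp add: Upsilon_def cong_def)
    ultimately have "[(\<Sum>i<k. dlt n F c i * y i) + t = t'] (mod n)"
      by (metis (no_types, lifting) cong_add cong_refl cong_sym cong_trans)
    then have "[(\<Sum>i<k. dlt n F c i * y i) + t - t = t' - t] (mod n)"
      by (rule cong_diff) simp
    then show ?thesis by simp
  qed
  show ?thesis using j dr sc Fc c unfolding j_def c_def[symmetric] by auto
qed

lemma psi_props:
  assumes F: "\<forall>c\<in>ciphertexts n k. F c \<in> ciphertexts n k"
    and a: "m \<in> vecs n k" "x \<in> vecs n k" "y \<in> unit_vecs n k"
    and ne: "F (enc n k (x, y) m) \<noteq> enc n k (x, y) m"
    and dc: "dec n k (x, y) (F (enc n k (x, y) m)) \<noteq> None"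
    and u: "1 \<le> u" "u \<le> p - 1"
  shows "Psi n k F ((m, x, y), u) \<in> sources n k \<times> keys n k
     \<and> enc n k (snd (Psi n k F ((m, x, y), u))) (fst (Psi n k F ((m, x, y), u))) = enc n k (x, y) m"
proof -
  define c where "c = enc n k (x, y) m"
  define j where "j = Jx k n F c"
  define m' where "m' = m(j := (m j * ivn n u) mod n)"
  define y' where "y' = y(j := (u * y j) mod n)"
  define x' where "x' = (\<lambda>i. if i < k then (fst c i - m' i) mod n else 0)"
  have P: "Psi n k F ((m, x, y), u) = (m', (x', y'))"
    unfolding Psi_def Let_def c_def j_def m'_def y'_def x'_def by simp
  have j: "j < k" using forge_facts[OF F a(1,2) ne dc] unfolding j_def c_def by blast
  have cu: "coprime u n" using u by (intro coprime_small) auto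
  have cy: "coprime (y j) n" using a(3) j by (auto simp: unit_vecs_def)
  have "coprime (u * y j mod n) n" using cu cy n1 by (simp add: coprime_mod_left_iff)
  then have y': "y' \<in> unit_vecs n k" using a(3) j n1 by (auto simp: unit_vecs_def vecs_def y'_def)
  have m': "m' \<in> vecs n k" using a(1) j n1 by (auto simp: vecs_def m'_def)
  have x': "x' \<in> vecs n k" using n1 by (auto simp: vecs_def x'_def)
  have cvv: "fst c \<in> vecs n k" using enc_in_ct[OF a(1), of x y] by (auto simp: c_def ciphertexts_def)
  have e1: "(\<lambda>i. if i < k then (m' i + x' i) mod n else 0) = fst c"
  proof
    fix i show "(if i < k then (m' i + x' i) mod n else 0) = fst c i"
    proof (cases "i < k")
      case True
      have "(m' i + (fst c i - m' i) mod n) mod n = fst c i mod n" by (simp add: mod_add_right_eq)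
      also have "\<dots> = fst c i" using cvv True by (simp add: vecs_def)
      finally show ?thesis using True by (simp add: x'_def)
    next
      case False then show ?thesis using cvv by (simp add: vecs_def)
    qed
  qed
  have su: "(\<Sum>i<k. m' i * y' i) - m' j * y' j = (\<Sum>i<k. m i * y i) - m j * y j"
    using j by (intro sum_upd_eq) (auto simp: m'_def y'_def)
  have "[m' j * y' j = (m j * ivn n u) * (u * y j)] (mod n)"
    by (simp add: m'_def y'_def cong_def mod_mult_eq)
  also have "(m j * ivn n u) * (u * y j) = (m j * y j) * (u * ivn n u)" by (simp add: algebra_simps)
  also have "[(m j * y j) * (u * ivn n u) = (m j * y j) * 1] (mod n)"
    using ivn[OF cu] by (intro cong_mult) auto
  finally have cj: "[m' j * y' j = m j * y j] (mod n)" by simp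
  have "(\<Sum>i<k. m' i * y' i) = ((\<Sum>i<k. m i * y i) - m j * y j) + m' j * y' j" using su by simp
  also have "[\<dots> = ((\<Sum>i<k. m i * y i) - m j * y j) + m j * y j] (mod n)"
    using cj by (intro cong_add) auto
  finally have "[(\<Sum>i<k. m' i * y' i) = (\<Sum>i<k. m i * y i)] (mod n)" by simp
  then have e2: "Upsilon n k y' m' = Upsilon n k y m" by (simp add: Upsilon_def cong_def)
  have "enc n k (x', y') m' = c"
    using e1 e2 by (simp add: enc_def c_def)
  then show ?thesis using P m' x' y' by (simp add: sources_def keys_def c_def)
qed

lemma Psi_eq:
  "Psi n k F ((m, x, y), u) =
    (m(Jx k n F (enc n k (x, y) m) := (m (Jx k n F (enc n k (x, y) m)) * ivn n u) mod n),
     (\<lambda>i. if i < k then (fst (enc n k (x, y) m) i - (m(Jx k n F (enc n k (x, y) m) := (m (Jx k n F (enc n k (x, y) m)) * ivn n u) mod n)) i) mod n else 0),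
     y(Jx k n F (enc n k (x, y) m) := (u * y (Jx k n F (enc n k (x, y) m))) mod n))"
  by (simp add: Psi_def Let_def)

lemma forge_bound:
  assumes F: "\<forall>c\<in>ciphertexts n k. F c \<in> ciphertexts n k"
  shows "card {(m, \<kappa>) \<in> sources n k \<times> keys n k.
            F (enc n k \<kappa> m) \<noteq> enc n k \<kappa> m \<and> dec n k \<kappa> (F (enc n k \<kappa> m)) \<noteq> None} * nat (p - 1)
         \<le> card (sources n k \<times> keys n k)"
proof -
  let ?T = "{(m, \<kappa>) \<in> sources n k \<times> keys n k.
            F (enc n k \<kappa> m) \<noteq> enc n k \<kappa> m \<and> dec n k \<kappa> (F (enc n k \<kappa> m)) \<noteq> None}"
  have finSK: "finite (sources n k \<times> keys n k)"
  proof (rule finite_subset[of _ "vecs n k \<times> (vecs n k \<times> vecs n k)"])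
    show "finite (vecs n k \<times> (vecs n k \<times> vecs n k))" using vecs_finite_card[of n k] n1 by auto
  qed (auto simp: sources_def keys_def unit_vecs_def)
  have "card (?T \<times> {1..p-1}) \<le> card (sources n k \<times> keys n k)"
  proof (rule card_inj_on_le[where f = "Psi n k F"])
    show "finite (sources n k \<times> keys n k)" by (rule finSK)
    show "Psi n k F ` (?T \<times> {1..p-1}) \<subseteq> sources n k \<times> keys n k"
    proof (rule image_subsetI)
      fix z assume z: "z \<in> ?T \<times> {1..p-1}"
      obtain m x y u where zz: "z = ((m, x, y), u)" by (metis prod.collapse)
      have h: "m \<in> vecs n k" "x \<in> vecs n k" "y \<in> unit_vecs n k"
        "F (enc n k (x, y) m) \<noteq> enc n k (x, y) m" "dec n k (x, y) (F (enc n k (x, y) m)) \<noteq> None"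
        "1 \<le> u" "u \<le> p - 1"
        using z zz by (auto simp: sources_def keys_def)
      show "Psi n k F z \<in> sources n k \<times> keys n k"
        using psi_props[OF F h] zz by simp
    qed
    show "inj_on (Psi n k F) (?T \<times> {1..p-1})"
    proof (rule inj_onI)
      fix z1 z2 assume z1: "z1 \<in> ?T \<times> {1..p-1}" and z2: "z2 \<in> ?T \<times> {1..p-1}"
        and eq: "Psi n k F z1 = Psi n k F z2"
      obtain m x y u where zz1: "z1 = ((m, x, y), u)" by (metis prod.collapse)
      obtain mm xx yy v where zz2: "z2 = ((mm, xx, yy), v)" by (metis prod.collapse)
      have h1: "m \<in> vecs n k" "x \<in> vecs n k" "y \<in> unit_vecs n k"
        "F (enc n k (x, y) m) \<noteq> enc n k (x, y) m" "dec n k (x, y) (F (enc n k (x, y) m)) \<noteq> None"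
        "1 \<le> u" "u \<le> p - 1"
        using z1 zz1 by (auto simp: sources_def keys_def)
      have h2: "mm \<in> vecs n k" "xx \<in> vecs n k" "yy \<in> unit_vecs n k"
        "F (enc n k (xx, yy) mm) \<noteq> enc n k (xx, yy) mm" "dec n k (xx, yy) (F (enc n k (xx, yy) mm)) \<noteq> None"
        "1 \<le> v" "v \<le> p - 1"
        using z2 zz2 by (auto simp: sources_def keys_def)
      have "enc n k (x, y) m = enc n k (xx, yy) mm"
        using psi_props[OF F h1] psi_props[OF F h2] eq zz1 zz2 by metis
      then obtain c where c1: "enc n k (x, y) m = c" and c2: "enc n k (xx, yy) mm = c" by blast
      define j where "j = Jx k n F c"
      have f1: "j < k" "0 < dlt n F c j" "dlt n F c j < n"
        "[(\<Sum>i<k. dlt n F c i * y i) = snd (F c) - snd c] (mod n)"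
        using forge_facts[OF F h1(1,2,4,5)] unfolding c1 j_def by auto
      have f2: "[(\<Sum>i<k. dlt n F c i * yy i) = snd (F c) - snd c] (mod n)"
        using forge_facts[OF F h2(1,2,4,5)] unfolding c2 j_def by auto
      have sc: "[(\<Sum>i<k. dlt n F c i * y i) = (\<Sum>i<k. dlt n F c i * yy i)] (mod n)"
        using f1(4) f2 by (metis cong_sym cong_trans)
      have E: "m(j := (m j * ivn n u) mod n) = mm(j := (mm j * ivn n v) mod n)"
        "y(j := (u * y j) mod n) = yy(j := (v * yy j) mod n)"
        using eq unfolding zz1 zz2 Psi_eq c1 c2 j_def[symmetric] by auto
      have yp: "coprime (y j) n" "0 \<le> y j" "y j < n"
        using h1(3) f1(1) by (auto simp: unit_vecs_def vecs_def)
      have yyp: "coprime (yy j) n" "0 \<le> yy j" "yy j < n"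
        using h2(3) f1(1) by (auto simp: unit_vecs_def vecs_def)
      have up: "0 < u" "u < p" "0 < v" "v < p" using h1 h2 by auto
      have uy: "u = v \<and> y = yy"
        by (rule gen_inj[where a="dlt n F c" and j=j and k=k and y=y and zz=yy and u=u and v=v,
             OF f1(1-3) yp(1) yyp(1) yp(2,3) yyp(2,3) sc up E(2)])
      have cu: "coprime u n" using up by (intro coprime_small) auto
      have mj: "(m j * ivn n u) mod n = (mm j * ivn n u) mod n"
        using E(1) uy by (metis fun_upd_same)
      then have "[m j = mm j] (mod n)"
        using cong_mult_rcancel[OF ivn_coprime[OF cu]] by (simp add: cong_def)
      then have "m j = mm j" using h1(1) h2(1) f1(1) mod_range_eq by (auto simp: vecs_def)
      moreover have "\<And>i. i \<noteq> j \<Longrightarrow> m i = mm i" using E(1) by (metis fun_upd_other)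
      ultimately have mm: "m = mm" by (metis ext)
      have "x = xx"
      proof
        fix i
        show "x i = xx i"
        proof (cases "i < k")
          case True
          have "(m i + x i) mod n = (m i + xx i) mod n"
            using c1 c2 True mm by (auto simp: enc_def fun_eq_iff split: if_splits)
          then have "[m i + x i = m i + xx i] (mod n)" by (simp add: cong_def)
          then have "[x i = xx i] (mod n)" by (simp add: cong_add_lcancel)
          then show ?thesis using h1(2) h2(2) True mod_range_eq by (auto simp: vecs_def)
        next
          case False
          then show ?thesis using h1(2) h2(2) by (auto simp: vecs_def)
        qed
      qed
      then show "z1 = z2" using zz1 zz2 mm uy by simp
    qed
  qed
  moreover have "card (?T \<times> {1..p-1}) = card ?T * card {1..p-1}"
    by (rule card_cartesian_product)
  moreover have "card {1..p-1} = nat (p - 1)" by simp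
  ultimately show ?thesis by simp
qed

end

lemma ratio_le:
  fixes N D A :: nat
  assumes "N * A \<le> D" "A > 0"
  shows "real N / real D \<le> 1 / real A"
proof (cases "D = 0")
  case True then show ?thesis by simp
next
  case False
  have "real N * real A \<le> real D" using assms(1) by (metis of_nat_le_iff of_nat_mult)
  then show ?thesis using False assms(2) by (simp add: divide_simps)
qed

theorem mainTheorem5:
  fixes n p :: int and k :: nat
  assumes "n > 1" and "odd n" and "k \<ge> 1"
    and "prime p" and "p dvd n" and "\<forall>q. prime q \<and> q dvd n \<longrightarrow> p \<le> q"
  shows "auth_code_with_secrecy n k
           (1 / (real_of_int (p - 1) * real_of_int n ^ (k - 1)))
           (1 / real_of_int (p - 1))
           (vecs n k - {zero_vec})"
proof -
  note ctx = assms(1) assms(4) assms(5) assms(6)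
  have p2: "p \<ge> 2" using assms(4) prime_ge_2_int by blast
  have rp: "real_of_int (p - 1) = real (nat (p - 1))" using p2 by simp
  have rn: "real_of_int n ^ (k - 1) = real (nat n ^ (k - 1))" using assms(1) by simp
  have sec: "provides_secrecy n k (1 / (real_of_int (p - 1) * real_of_int n ^ (k - 1))) (vecs n k - {zero_vec})"
    unfolding provides_secrecy_def
  proof (intro ballI impI)
    fix m c assume m: "m \<in> vecs n k - {zero_vec}" and c: "c \<in> ciphertexts n k"
    obtain cv t where ct: "c = (cv, t)" by (cases c)
    have cv: "cv \<in> vecs n k" "0 \<le> t" "t < n" using c ct by (auto simp: ciphertexts_def)
    have "m \<noteq> zero_vec" using m by simp
    then obtain j where "m j \<noteq> 0" by (auto simp: zero_vec_def fun_eq_iff)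
    moreover have mv: "m \<in> vecs n k" using m by simp
    ultimately have jk: "j < k" by (metis (mono_tags, lifting) leI mem_Collect_eq vecs_def)
    then have j: "j < k" "0 < m j" "m j < n" using mv \<open>m j \<noteq> 0\<close>
      by (auto simp: vecs_def order_le_less)
    obtain k' where k': "k = Suc k'" using assms(3) by (metis Suc_pred' less_eq_Suc_le Suc_le_eq One_nat_def)
    have a1: "card {(m', \<kappa>) \<in> sources n k \<times> keys n k. m' = m \<and> enc n k \<kappa> m' = (cv, t)}
         \<le> card {y \<in> unit_vecs n k. Upsilon n k y m = t}"
      using num_le[OF ctx] assms(1) by simp
    have a2: "card {y \<in> unit_vecs n k. Upsilon n k y m = t} * nat (p - 1) \<le> card (unit_vecs n k)"
      using Y_bound[where m=m and j=j and k=k and t=t, OF ctx j] .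
    have a3: "card (unit_vecs n k) * nat n ^ (k - 1)
      \<le> card {(m', \<kappa>) \<in> sources n k \<times> keys n k. enc n k \<kappa> m' = (cv, t)}"
      using den_bound[OF ctx, of cv k' t] cv k' by simp
    let ?N = "card {(m', \<kappa>) \<in> sources n k \<times> keys n k. m' = m \<and> enc n k \<kappa> m' = (cv, t)}"
    let ?D = "card {(m', \<kappa>) \<in> sources n k \<times> keys n k. enc n k \<kappa> m' = (cv, t)}"
    have "?N * (nat (p - 1) * nat n ^ (k - 1)) \<le> ?D"
    proof -
      have "?N * (nat (p - 1) * nat n ^ (k - 1)) \<le> card {y \<in> unit_vecs n k. Upsilon n k y m = t} * nat (p - 1) * nat n ^ (k - 1)"
        using a1 by (simp add: mult.assoc)
      also have "\<dots> \<le> card (unit_vecs n k) * nat n ^ (k - 1)" using a2 by simp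
      also have "\<dots> \<le> ?D" by (rule a3)
      finally show ?thesis .
    qed
    moreover have "nat (p - 1) * nat n ^ (k - 1) > 0" using p2 assms(1) by simp
    ultimately have "real ?N / real ?D \<le> 1 / real (nat (p - 1) * nat n ^ (k - 1))"
      by (rule ratio_le)
    then show "cond_prob_source n k m c \<le> 1 / (real_of_int (p - 1) * real_of_int n ^ (k - 1))"
      unfolding cond_prob_source_def ct rp rn by simp
  qed
  have sub: "secure_against_substitution n k (1 / real_of_int (p - 1))"
    unfolding secure_against_substitution_def
  proof (intro allI impI)
    fix F assume F: "\<forall>c\<in>ciphertexts n k. F c \<in> ciphertexts n k"
    have "real (card {(m, \<kappa>) \<in> sources n k \<times> keys n k.
            F (enc n k \<kappa> m) \<noteq> enc n k \<kappa> m \<and> dec n k \<kappa> (F (enc n k \<kappa> m)) \<noteq> None})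
          / real (card (sources n k \<times> keys n k)) \<le> 1 / real (nat (p - 1))"
      by (rule ratio_le[OF forge_bound[OF ctx F]]) (use p2 in simp)
    then show "subst_success_prob n k F \<le> 1 / real_of_int (p - 1)"
      unfolding subst_success_prob_def rp by simp
  qed
  show ?thesis unfolding auth_code_with_secrecy_def using sec sub by simp
qed

end
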